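(* For every integer $k \geq 3$ there exists an instance $H=(V,E,C,\ell)$ of \textsc{MinECC} with $k$ colors, all edge weights equal to $1$, and rank $r = k-1$ (so $k = r+1$), such that the optimal \textsc{MinECC} value (minimum number of mistakes over all node colorings) is $k-1 = r$, while the optimal value of the \textsc{MinECC} LP relaxation on $H$ is $\frac{k}{2} = \frac{r+1}{2}$. Consequently the integrality gap of the \textsc{MinECC} LP relaxation is at least $2\left(1-\frac1k\right) = 2\left(1-\frac{1}{r+1}\right)$.
   Context: An edge-colored hypergraph is $H=(V,E,C,\ell)$ with finite node set $V$, a multiset $E$ of nonempty subsets of $V$ (edges), a color set $C=[k]=\{1,\dots,k\}$, a map $\ell\colon E\to C$, and weights $w_e\ge 0$ for $e\in E$. The rank $r$ is $\max_{e\in E}|e|$. A node coloring is a map $Y\colon V\to C$; it makes a mistake at $e$ (written $e\in\mathcal M_Y$) if some $v\in e$ has $Y[v]\neq \ell(e)$. The \textsc{MinECC} problem is to minimize $\sum_{e\in E} w_e \mathbb 1[e\in\mathcal M_Y]$ over all $Y$. The \textsc{MinECC} LP relaxation has variables $x_v^i$ ($v\in V$, $i\in C$) and $x_e$ ($e\in E$) and is: minimize $\sum_{e\in E} w_e x_e$ subject to $\sum_{i=1}^k x_v^i = k-1$ for all $v\in V$; $x_e \ge x_v^{\ell(e)}$ for all $e\in E$ and $v\in e$; $0\le x_v^i\le 1$; $0\le x_e\le 1$. *)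

theory Defs
  imports Main "HOL.Real"
begin

text \<open>An edge-colored hypergraph with node set V, edges indexed by a finite index set E
  (so that repeated edges -- a multiset -- are allowed), edge e has node set edge e
  and color lab e, color set {1..k}, weights w.\<close>

definition ecc_instance :: "'v set \<Rightarrow> 'e set \<Rightarrow> ('e \<Rightarrow> 'v set) \<Rightarrow> ('e \<Rightarrow> nat) \<Rightarrow> ('e \<Rightarrow> real) \<Rightarrow> nat \<Rightarrow> bool" where
  "ecc_instance V E edge lab w k \<longleftrightarrow>
     finite V \<and> finite E \<and>
     (\<forall>e\<in>E. edge e \<noteq> {} \<and> edge e \<subseteq> V \<and> lab e \<in> {1..k} \<and> w e \<ge> 0)"

definition ecc_rank :: "'e set \<Rightarrow> ('e \<Rightarrow> 'v set) \<Rightarrow> nat" where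
  "ecc_rank E edge = Max ((\<lambda>e. card (edge e)) ` E)"

definition node_coloring :: "'v set \<Rightarrow> nat \<Rightarrow> ('v \<Rightarrow> nat) \<Rightarrow> bool" where
  "node_coloring V k Y \<longleftrightarrow> (\<forall>v\<in>V. Y v \<in> {1..k})"

definition mistake :: "('e \<Rightarrow> 'v set) \<Rightarrow> ('e \<Rightarrow> nat) \<Rightarrow> ('v \<Rightarrow> nat) \<Rightarrow> 'e \<Rightarrow> bool" where
  "mistake edge lab Y e \<longleftrightarrow> (\<exists>v\<in>edge e. Y v \<noteq> lab e)"

definition ecc_cost :: "'e set \<Rightarrow> ('e \<Rightarrow> 'v set) \<Rightarrow> ('e \<Rightarrow> nat) \<Rightarrow> ('e \<Rightarrow> real) \<Rightarrow> ('v \<Rightarrow> nat) \<Rightarrow> real" where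
  "ecc_cost E edge lab w Y = (\<Sum>e\<in>E. w e * (if mistake edge lab Y e then 1 else 0))"

definition ecc_opt :: "'v set \<Rightarrow> 'e set \<Rightarrow> ('e \<Rightarrow> 'v set) \<Rightarrow> ('e \<Rightarrow> nat) \<Rightarrow> ('e \<Rightarrow> real) \<Rightarrow> nat \<Rightarrow> real" where
  "ecc_opt V E edge lab w k = Inf {ecc_cost E edge lab w Y | Y. node_coloring V k Y}"

text \<open>Feasibility for the MinECC LP relaxation; xv v i is x_v^i, xe e is x_e.\<close>
definition lp_feasible :: "'v set \<Rightarrow> 'e set \<Rightarrow> ('e \<Rightarrow> 'v set) \<Rightarrow> ('e \<Rightarrow> nat) \<Rightarrow> nat
     \<Rightarrow> ('v \<Rightarrow> nat \<Rightarrow> real) \<Rightarrow> ('e \<Rightarrow> real) \<Rightarrow> bool" where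
  "lp_feasible V E edge lab k xv xe \<longleftrightarrow>
     (\<forall>v\<in>V. (\<Sum>i\<in>{1..k}. xv v i) = real k - 1) \<and>
     (\<forall>e\<in>E. \<forall>v\<in>edge e. xe e \<ge> xv v (lab e)) \<and>
     (\<forall>v\<in>V. \<forall>i\<in>{1..k}. 0 \<le> xv v i \<and> xv v i \<le> 1) \<and>
     (\<forall>e\<in>E. 0 \<le> xe e \<and> xe e \<le> 1)"

definition lp_obj :: "'e set \<Rightarrow> ('e \<Rightarrow> real) \<Rightarrow> ('e \<Rightarrow> real) \<Rightarrow> real" where
  "lp_obj E w xe = (\<Sum>e\<in>E. w e * xe e)"

definition ecc_lp_opt :: "'v set \<Rightarrow> 'e set \<Rightarrow> ('e \<Rightarrow> 'v set) \<Rightarrow> ('e \<Rightarrow> nat) \<Rightarrow> ('e \<Rightarrow> real) \<Rightarrow> nat \<Rightarrow> real" where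
  "ecc_lp_opt V E edge lab w k =
     Inf {lp_obj E w xe | xv xe. lp_feasible V E edge lab k xv xe}"

end

theory Submission
  imports Defs "HOL-Library.Nat_Bijection"
begin

definition pv :: "nat \<Rightarrow> nat \<Rightarrow> nat" where
  "pv i j = prod_encode (min i j, max i j)"

lemma pv_sym: "pv i j = pv j i"
  unfolding pv_def by (simp add: min.commute max.commute)

lemma pv_dec: "prod_decode (pv a b) = (min a b, max a b)"
  unfolding pv_def by simp

lemma pv_inj2: "pv i j = pv i j' \<Longrightarrow> j = j'"
  unfolding pv_def by (auto dest!: inj_onD[OF inj_prod_encode] simp: min_def max_def split: if_splits)

lemma double_sum:
  fixes a :: "nat \<Rightarrow> real"
  assumes "finite I"
  shows "(\<Sum>i\<in>I. \<Sum>j\<in>I-{i}. a i + a j) = 2 * (real (card I) - 1) * (\<Sum>i\<in>I. a i)"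
proof -
  have "(\<Sum>i\<in>I. \<Sum>j\<in>I-{i}. a i + a j) = (\<Sum>i\<in>I. (real (card I) - 1) * a i + ((\<Sum>j\<in>I. a j) - a i))"
  proof (rule sum.cong[OF refl])
    fix i assume i: "i \<in> I"
    have "(\<Sum>j\<in>I-{i}. a i + a j) = (\<Sum>j\<in>I-{i}. a i) + (\<Sum>j\<in>I-{i}. a j)"
      by (simp add: sum.distrib)
    also have "(\<Sum>j\<in>I-{i}. a i) = (real (card I) - 1) * a i"
      using i assms by (simp add: card_Diff_singleton of_nat_diff card_gt_0_iff)
        (metis One_nat_def Suc_leI card_gt_0_iff emptyE of_nat_1 of_nat_diff)
    also have "(\<Sum>j\<in>I-{i}. a j) = (\<Sum>j\<in>I. a j) - a i"
      using i assms by (simp add: sum_diff1)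
    finally show "(\<Sum>j\<in>I-{i}. a i + a j) = (real (card I) - 1) * a i + ((\<Sum>j\<in>I. a j) - a i)" .
  qed
  also have "\<dots> = (real (card I) - 1) * (\<Sum>i\<in>I. a i) + (real (card I) * (\<Sum>j\<in>I. a j) - (\<Sum>i\<in>I. a i))"
    by (simp add: sum.distrib sum_subtractf sum_distrib_left[symmetric])
  also have "\<dots> = 2 * (real (card I) - 1) * (\<Sum>i\<in>I. a i)"
    by (simp add: algebra_simps)
  finally show ?thesis .
qed

theorem lemma1:
  fixes k :: nat
  assumes "k \<ge> 3"
  shows "\<exists>(V::nat set) (E::nat set) edge lab.
           ecc_instance V E edge lab (\<lambda>_. 1) k \<and>
           ecc_rank E edge = k - 1 \<and>
           ecc_opt V E edge lab (\<lambda>_. 1) k = real (k - 1) \<and>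
           ecc_lp_opt V E edge lab (\<lambda>_. 1) k = real k / 2 \<and>
           ecc_opt V E edge lab (\<lambda>_. 1) k / ecc_lp_opt V E edge lab (\<lambda>_. 1) k
             = 2 * (1 - 1 / real k)"
proof -
  define E :: "nat set" where "E = {1..k}"
  define edge where "edge i = (\<lambda>j. pv i j) ` ({1..k} - {i})" for i
  define V where "V = \<Union> (edge ` E)"
  define lab :: "nat \<Rightarrow> nat" where "lab i = i" for i
  have cardE: "card E = k" unfolding E_def by simp
  have card_edge: "card (edge i) = k - 1" if "i \<in> E" for i
  proof -
    have "inj_on (pv i) ({1..k} - {i})" by (auto intro: inj_onI pv_inj2)
    then show ?thesis using that unfolding edge_def E_def by (simp add: card_image)
  qed
  have ne: "edge e \<noteq> {}" if "e \<in> E" for e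
  proof -
    have "pv e (if e = 1 then 2 else 1) \<in> edge e" using that assms unfolding edge_def E_def by auto
    then show ?thesis by auto
  qed
  have inst: "ecc_instance V E edge lab (\<lambda>_. 1) k"
    unfolding ecc_instance_def using assms ne
    by (auto simp: V_def E_def edge_def lab_def)
  have rank: "ecc_rank E edge = k - 1"
  proof -
    have "(\<lambda>e. card (edge e)) ` E = {k - 1}" using card_edge assms unfolding E_def by force
    then show ?thesis unfolding ecc_rank_def by simp
  qed
  have cost_eq: "ecc_cost E edge lab (\<lambda>_. 1) Y = real (card {e\<in>E. mistake edge lab Y e})" for Y
    unfolding ecc_cost_def by (simp add: sum.If_cases E_def Int_def Collect_conj_eq[symmetric] conj_commute)
  have cost_lb: "ecc_cost E edge lab (\<lambda>_. 1) Y \<ge> real (k - 1)" for Y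
  proof -
    let ?G = "{e\<in>E. \<not> mistake edge lab Y e}"
    have sub: "?G \<subseteq> {e. e \<in> E}" by auto
    have finG: "finite ?G" unfolding E_def by simp
    have allEq: "\<forall>x\<in>?G. \<forall>y\<in>?G. x = y"
      proof (intro ballI, rule ccontr)
        fix x y assume x: "x \<in> ?G" and y: "y \<in> ?G" and ne: "x \<noteq> y"
        have "pv x y \<in> edge x" using x y ne unfolding edge_def E_def by auto
        moreover have "pv x y \<in> edge y" using x y ne unfolding edge_def E_def
          by (auto simp: pv_sym)
        ultimately have "Y (pv x y) = x" "Y (pv x y) = y" using x y
          unfolding mistake_def lab_def by auto
        with ne show False by simp
      qed
    have atmost: "card ?G \<le> 1" using card_le_Suc0_iff_eq[OF finG] allEq by simp
    have "card {e\<in>E. mistake edge lab Y e} + card ?G = card E"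
    proof -
      have "E = {e\<in>E. mistake edge lab Y e} \<union> ?G" by auto
      moreover have "card ({e\<in>E. mistake edge lab Y e} \<union> ?G) = card {e\<in>E. mistake edge lab Y e} + card ?G"
        by (rule card_Un_disjoint) (auto simp: E_def)
      ultimately show ?thesis by simp
    qed
    then have "card {e\<in>E. mistake edge lab Y e} \<ge> k - 1" using atmost cardE by linarith
    then show ?thesis unfolding cost_eq by simp
  qed
  have cost1: "ecc_cost E edge lab (\<lambda>_. 1) (\<lambda>_. 1) = real (k - 1)"
  proof -
    have "{e\<in>E. mistake edge lab (\<lambda>_. 1) e} = E - {1}"
      unfolding E_def mistake_def lab_def edge_def using assms by force
    then show ?thesis unfolding cost_eq using assms by (simp add: E_def)
  qed
  have opt: "ecc_opt V E edge lab (\<lambda>_. 1) k = real (k - 1)"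
    unfolding ecc_opt_def
  proof (rule cInf_eq_minimum)
    show "real (k - 1) \<in> {ecc_cost E edge lab (\<lambda>_. 1) Y |Y. node_coloring V k Y}"
      using cost1 assms unfolding node_coloring_def by (intro CollectI exI[of _ "\<lambda>_. 1"]) auto
  next
    fix y assume "y \<in> {ecc_cost E edge lab (\<lambda>_. 1) Y |Y. node_coloring V k Y}"
    then show "real (k - 1) \<le> y" using cost_lb by auto
  qed
  define xv :: "nat \<Rightarrow> nat \<Rightarrow> real" where
    "xv v i = (if fst (prod_decode v) = i \<or> snd (prod_decode v) = i then 1/2 else 1)" for v i
  define xe :: "nat \<Rightarrow> real" where "xe e = 1/2" for e
  have Vmem: "v \<in> V \<longleftrightarrow> (\<exists>a b. a \<in> {1..k} \<and> b \<in> {1..k} \<and> a \<noteq> b \<and> v = pv a b)" for v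
    unfolding V_def E_def edge_def by blast
  have sumv: "(\<Sum>i\<in>{1..k}. xv v i) = real k - 1" if vV: "v \<in> V" for v
  proof -
    obtain a b where ab: "a \<in> {1..k}" "b \<in> {1..k}" "a \<noteq> b" "v = pv a b" using vV Vmem by auto
    have "xv v i = 1 - (if i \<in> {a,b} then 1/2 else 0)" for i
      unfolding xv_def ab(4) pv_dec by (auto simp: min_def max_def)
    then have "(\<Sum>i\<in>{1..k}. xv v i) = (\<Sum>i\<in>{1..k}. 1 - (if i \<in> {a,b} then 1/2 else 0))" by simp
    also have "\<dots> = real k - (\<Sum>i\<in>{1..k}. (if i \<in> {a,b} then 1/2 else 0))"
      by (simp add: sum_subtractf)
    also have "(\<Sum>i\<in>{1..k}. (if i \<in> {a,b} then (1/2::real) else 0)) = 1"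
    proof -
      have "(\<Sum>i\<in>{1..k}. (if i \<in> {a,b} then (1/2::real) else 0)) = (\<Sum>i\<in>{1..k} \<inter> {a,b}. 1/2)"
        by (rule sum.inter_restrict[symmetric]) simp
      also have "{1..k} \<inter> {a,b} = {a,b}" using ab by auto
      finally show ?thesis using ab by simp
    qed
    finally show ?thesis .
  qed
  have c2: "\<forall>e\<in>E. \<forall>v\<in>edge e. xv v (lab e) \<le> xe e"
  proof (intro ballI)
    fix e v assume e: "e \<in> E" and v: "v \<in> edge e"
    then obtain j where "v = pv e j" "j \<noteq> e" unfolding edge_def by auto
    then show "xv v (lab e) \<le> xe e" unfolding xv_def xe_def lab_def
      by (auto simp: pv_dec min_def max_def)
  qed
  have c1: "\<forall>v\<in>V. (\<Sum>i\<in>{1..k}. xv v i) = real k - 1" using sumv by blast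
  have c3: "\<forall>v\<in>V. \<forall>i\<in>{1..k}. 0 \<le> xv v i \<and> xv v i \<le> 1" by (auto simp: xv_def)
  have c4: "\<forall>e\<in>E. 0 \<le> xe e \<and> xe e \<le> 1" by (auto simp: xe_def)
  have feas: "lp_feasible V E edge lab k xv xe"
    unfolding lp_feasible_def using c1 c2 c3 c4 by blast
  have obj: "lp_obj E (\<lambda>_. 1) xe = real k / 2"
    unfolding lp_obj_def xe_def E_def by simp
  have lp_lb: "lp_obj E (\<lambda>_. 1) ye \<ge> real k / 2" if f: "lp_feasible V E edge lab k yv ye" for yv ye
  proof -
    have pair: "ye i + ye j \<ge> 1" if ij: "i \<in> E" "j \<in> E - {i}" for i j
    proof -
      let ?v = "pv i j"
      have vi: "?v \<in> edge i" using ij unfolding edge_def E_def by auto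
      have vj: "?v \<in> edge j" using ij unfolding edge_def E_def by (auto simp: pv_sym)
      have vV: "?v \<in> V" using vi ij unfolding V_def by auto
      have s: "(\<Sum>l\<in>{1..k}. yv ?v l) = real k - 1" using f vV unfolding lp_feasible_def by auto
      have le1: "\<forall>l\<in>{1..k}. yv ?v l \<le> 1" using f vV unfolding lp_feasible_def by auto
      have split: "(\<Sum>l\<in>{1..k}. yv ?v l) = yv ?v i + yv ?v j + (\<Sum>l\<in>{1..k}-{i,j}. yv ?v l)"
      proof -
        have "{1..k} = {i,j} \<union> ({1..k}-{i,j})" using ij unfolding E_def by auto
        then have "(\<Sum>l\<in>{1..k}. yv ?v l) = (\<Sum>l\<in>{i,j} \<union> ({1..k}-{i,j}). yv ?v l)" by simp
        also have "\<dots> = (\<Sum>l\<in>{i,j}. yv ?v l) + (\<Sum>l\<in>{1..k}-{i,j}. yv ?v l)"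
          by (rule sum.union_disjoint) auto
        finally show ?thesis using ij by simp
      qed
      have "(\<Sum>l\<in>{1..k}-{i,j}. yv ?v l) \<le> (\<Sum>l\<in>{1..k}-{i,j}. 1)"
        using le1 by (intro sum_mono) auto
      also have "\<dots> = real (k - 2)"
        using ij unfolding E_def by (simp add: card_Diff_subset)
      finally have rest: "(\<Sum>l\<in>{1..k}-{i,j}. yv ?v l) \<le> real (k - 2)" .
      have "yv ?v i \<le> ye i" "yv ?v j \<le> ye j" using f vi vj ij
        unfolding lp_feasible_def lab_def by auto
      moreover have "real (k - 2) = real k - 2" using assms by simp
      ultimately show ?thesis using s split rest by linarith
    qed
    have "(\<Sum>i\<in>E. \<Sum>j\<in>E-{i}. ye i + ye j) \<ge> (\<Sum>i\<in>E. \<Sum>j\<in>E-{i}. (1::real))"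
      using pair by (intro sum_mono) auto
    also have "(\<Sum>i\<in>E. \<Sum>j\<in>E-{i}. (1::real)) = real k * (real k - 1)"
      using cardE assms unfolding E_def by simp
    finally have "2 * (real k - 1) * (\<Sum>i\<in>E. ye i) \<ge> real k * (real k - 1)"
      using double_sum[of E ye] cardE unfolding E_def by simp
    moreover have "real k - 1 > 0" using assms by simp
    ultimately have "2 * (\<Sum>i\<in>E. ye i) \<ge> real k"
      by (metis mult.commute mult.left_commute mult_le_cancel_left_pos)
    then show ?thesis unfolding lp_obj_def by simp
  qed
  have lpopt: "ecc_lp_opt V E edge lab (\<lambda>_. 1) k = real k / 2"
    unfolding ecc_lp_opt_def
  proof (rule cInf_eq_minimum)
    show "real k / 2 \<in> {lp_obj E (\<lambda>_. 1) xe |xv xe. lp_feasible V E edge lab k xv xe}"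
      unfolding mem_Collect_eq using feas obj by (intro exI[of _ xv] exI[of _ xe]) simp
  next
    fix y assume "y \<in> {lp_obj E (\<lambda>_. 1) xe |xv xe. lp_feasible V E edge lab k xv xe}"
    then show "real k / 2 \<le> y" using lp_lb by auto
  qed
  have ratio: "real (k - 1) / (real k / 2) = 2 * (1 - 1 / real k)"
    using assms by (simp add: of_nat_diff field_simps)
  show ?thesis
    apply (rule exI[where x=V])
    apply (rule exI[where x=E])
    apply (rule exI[where x=edge])
    apply (rule exI[where x=lab])
    unfolding opt lpopt using inst rank ratio by simp
qed

end
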